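(* Let $f:\Sigma\to\mathbb{L}^3$ be a minface, written near a regular point $p$ in local coordinates $(u,v)$ as $f(u,v)=\frac{\varphi(u)+\psi(v)}{2}$ with $\varphi(u)=\int_{u_0}^u(-1-g_1^2,1-g_1^2,2g_1)\hat\omega_1\,du$ and $\psi(v)=\int_{v_0}^v(1+g_2^2,1-g_2^2,-2g_2)\hat\omega_2\,dv$ (plus a constant), and let $p=(u_p,v_p)$. Then: (i) $p$ is an umbilic point of $f$ if and only if both null curves $\varphi$ and $\psi$ are degenerate at $p$ (i.e. $\varphi$ at $u_p$ and $\psi$ at $v_p$); (ii) $p$ is a quasi-umbilic point of $f$ if and only if exactly one of the two null curves $\varphi$, $\psi$ is degenerate at $p$.
   Context: $\mathbb{L}^3$ is $\mathbb{R}^3$ with the Lorentzian metric $-(dx^0)^2+(dx^1)^2+(dx^2)^2$. A smooth map $f:\Sigma\to\mathbb{L}^3$ from a connected oriented 2-manifold is a minface if around each point there are local coordinates $(u,v)$ on a domain $U$, smooth functions $g_1(u)$, $g_2(v)$ and nowhere-vanishing smooth functions $\hat\omega_1(u)$, $\hat\omega_2(v)$, with $g_1g_2\neq1$ on an open dense subset of $U$, such that $f=\frac{\varphi(u)+\psi(v)}{2}+\mathrm{const}$ with $\varphi,\psi$ as in the claim; $\varphi$ and $\psi$ are null curves (regular curves with lightlike velocity). Regular points are points where $f$ is an immersion; there $f$ is a timelike immersion with zero mean curvature. A null curve $\gamma$ is degenerate at $t$ if $\gamma'(t)\times\gamma''(t)=0$ (cross product) and non-degenerate otherwise. At a regular point,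 with spacelike unit normal $\nu$, the shape operator $S$ is given by $df(S(X))=-\overline\nabla_X\nu$; the point is umbilic if the second fundamental form is a scalar multiple of the first fundamental form there, and quasi-umbilic if $S$ is not diagonalizable over $\mathbb{C}$ there. *)

theory Defs
  imports "HOL-Analysis.Analysis"
begin

text \<open>Lorentz-Minkowski space L^3: real^3 with metric -(dx0)^2+(dx1)^2+(dx2)^2.
  The coordinate x^0 is component 1, x^1 is component 2, x^2 is component 3.\<close>

definition lip :: "real^3 \<Rightarrow> real^3 \<Rightarrow> real" where
  "lip x y = - (x$1 * y$1) + x$2 * y$2 + x$3 * y$3"

text \<open>Lorentzian cross product: lip (lcross x y) z = det(x,y,z).\<close>
definition lcross :: "real^3 \<Rightarrow> real^3 \<Rightarrow> real^3" where
  "lcross x y = (let c = cross3 x y in vector [- (c$1), c$2, c$3])"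

definition smooth_on :: "real set \<Rightarrow> (real \<Rightarrow> real) \<Rightarrow> bool" where
  "smooth_on S g \<longleftrightarrow> (\<forall>n. \<forall>x\<in>S. ((deriv ^^ n) g) field_differentiable (at x))"

definition pd_u :: "(real \<times> real \<Rightarrow> real^3) \<Rightarrow> real \<times> real \<Rightarrow> real^3" where
  "pd_u f p = vector_derivative (\<lambda>u. f (u, snd p)) (at (fst p))"
definition pd_v :: "(real \<times> real \<Rightarrow> real^3) \<Rightarrow> real \<times> real \<Rightarrow> real^3" where
  "pd_v f p = vector_derivative (\<lambda>v. f (fst p, v)) (at (snd p))"
definition pd_uu :: "(real \<times> real \<Rightarrow> real^3) \<Rightarrow> real \<times> real \<Rightarrow> real^3" where
  "pd_uu f p = vector_derivative (\<lambda>u. pd_u f (u, snd p)) (at (fst p))"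
definition pd_uv :: "(real \<times> real \<Rightarrow> real^3) \<Rightarrow> real \<times> real \<Rightarrow> real^3" where
  "pd_uv f p = vector_derivative (\<lambda>v. pd_u f (fst p, v)) (at (snd p))"
definition pd_vv :: "(real \<times> real \<Rightarrow> real^3) \<Rightarrow> real \<times> real \<Rightarrow> real^3" where
  "pd_vv f p = vector_derivative (\<lambda>v. pd_v f (fst p, v)) (at (snd p))"

definition regular_point :: "(real \<times> real \<Rightarrow> real^3) \<Rightarrow> real \<times> real \<Rightarrow> bool" where
  "regular_point f p \<longleftrightarrow> f differentiable (at p) \<and> inj (frechet_derivative f (at p))"

definition unit_normal :: "(real \<times> real \<Rightarrow> real^3) \<Rightarrow> real \<times> real \<Rightarrow> real^3" where
  "unit_normal f p = (let n = lcross (pd_u f p) (pd_v f p) in (1 / sqrt (lip n n)) *\<^sub>R n)"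

definition first_ff :: "(real \<times> real \<Rightarrow> real^3) \<Rightarrow> real \<times> real \<Rightarrow> real^2^2" where
  "first_ff f p = vector [vector [lip (pd_u f p) (pd_u f p), lip (pd_u f p) (pd_v f p)],
                          vector [lip (pd_v f p) (pd_u f p), lip (pd_v f p) (pd_v f p)]]"

definition second_ff :: "(real \<times> real \<Rightarrow> real^3) \<Rightarrow> real \<times> real \<Rightarrow> real^2^2" where
  "second_ff f p = (let \<nu> = unit_normal f p in
     vector [vector [lip (pd_uu f p) \<nu>, lip (pd_uv f p) \<nu>],
             vector [lip (pd_uv f p) \<nu>, lip (pd_vv f p) \<nu>]])"

text \<open>Shape operator S (df(S X) = - nabla_X nu), whose matrix is I^{-1} II.\<close>
definition shape_operator :: "(real \<times> real \<Rightarrow> real^3) \<Rightarrow> real \<times> real \<Rightarrow> real^2^2" where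
  "shape_operator f p = matrix_inv (first_ff f p) ** second_ff f p"

definition diagonalizable_over_C :: "real^2^2 \<Rightarrow> bool" where
  "diagonalizable_over_C A \<longleftrightarrow>
     (\<exists>P :: complex^2^2. invertible P \<and>
        (\<forall>i j. i \<noteq> j \<longrightarrow> (matrix_inv P ** map_matrix complex_of_real A ** P) $ i $ j = 0))"

definition umbilic_at :: "(real \<times> real \<Rightarrow> real^3) \<Rightarrow> real \<times> real \<Rightarrow> bool" where
  "umbilic_at f p \<longleftrightarrow> regular_point f p \<and> (\<exists>k::real. second_ff f p = k *\<^sub>R first_ff f p)"

definition quasi_umbilic_at :: "(real \<times> real \<Rightarrow> real^3) \<Rightarrow> real \<times> real \<Rightarrow> bool" where
  "quasi_umbilic_at f p \<longleftrightarrow> regular_point f p \<and> \<not> diagonalizable_over_C (shape_operator f p)"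

definition degenerate_at :: "(real \<Rightarrow> real^3) \<Rightarrow> real \<Rightarrow> bool" where
  "degenerate_at \<gamma> t \<longleftrightarrow>
     cross3 (vector_derivative \<gamma> (at t))
            (vector_derivative (\<lambda>s. vector_derivative \<gamma> (at s)) (at t)) = 0"

end

theory Submission
  imports Defs
begin



lemma minv_props:
  fixes A :: "'a::semiring_1^'n^'n"
  assumes "invertible A"
  shows "A ** matrix_inv A = mat 1" "matrix_inv A ** A = mat 1"
  using someI_ex[OF assms[unfolded invertible_def]] unfolding matrix_inv_def by auto

lemma minv_unique:
  fixes A B :: "'a::semiring_1^'n^'n"
  assumes "A ** B = mat 1" "B ** A = mat 1"
  shows "matrix_inv A = B"
proof -
  have inv: "invertible A" using assms invertible_def by blast
  have "matrix_inv A = matrix_inv A ** (A ** B)" using assms by (simp add: matrix_mul_rid)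
  also have "... = (matrix_inv A ** A) ** B" by (simp add: matrix_mul_assoc)
  also have "... = B" using minv_props[OF inv] by (simp add: matrix_mul_lid)
  finally show ?thesis .
qed

lemma mat2_eq: "(A::'a^2^2) = B \<longleftrightarrow> A$1$1 = B$1$1 \<and> A$1$2 = B$1$2 \<and> A$2$1 = B$2$1 \<and> A$2$2 = B$2$2"
  by (auto simp: vec_eq_iff forall_2)

lemma mmult2: "((A::'a::semiring_1^2^2) ** B) $ i $ j = A$i$1 * B$1$j + A$i$2 * B$2$j"
  by (simp add: matrix_matrix_mult_def sum_2)

lemma mat1_2: "(mat 1 :: 'a::semiring_1^2^2) $1$1 = 1" "(mat 1 :: 'a::semiring_1^2^2) $2$2 = 1"
   "(mat 1 :: 'a::semiring_1^2^2) $1$2 = 0" "(mat 1 :: 'a::semiring_1^2^2) $2$1 = 0"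
  by (simp_all add: mat_def)

lemma inv_antidiag:
  fixes F :: real
  assumes "F \<noteq> 0"
  shows "matrix_inv (vector [vector [0, F], vector [F, 0]] :: real^2^2) = vector [vector [0, 1/F], vector [1/F, 0]]"
  by (rule minv_unique) (simp_all add: mat2_eq mmult2 mat1_2 assms)

lemma nondiag_nilp:
  fixes S :: "complex^2^2"
  assumes "S ** S = 0" "S \<noteq> 0"
  shows "\<not> (\<exists>P :: complex^2^2. invertible P \<and>
        (\<forall>i j. i \<noteq> j \<longrightarrow> (matrix_inv P ** S ** P) $ i $ j = 0))"
proof
  assume "\<exists>P :: complex^2^2. invertible P \<and>
        (\<forall>i j. i \<noteq> j \<longrightarrow> (matrix_inv P ** S ** P) $ i $ j = 0)"
  then obtain P :: "complex^2^2" where P: "invertible P" and off: "\<forall>i j. i \<noteq> j \<longrightarrow> (matrix_inv P ** S ** P) $ i $ j = 0"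
    by blast
  define D where "D = matrix_inv P ** S ** P"
  have "D ** D = matrix_inv P ** S ** (P ** matrix_inv P) ** S ** P"
    by (simp add: D_def matrix_mul_assoc)
  also have "... = matrix_inv P ** (S ** S) ** P" using minv_props[OF P] by (simp add: matrix_mul_rid matrix_mul_assoc)
  also have "... = 0" using assms(1) by (simp add: mat2_eq mmult2)
  finally have DD: "D ** D = 0" .
  have o12: "D$1$2 = 0" and o21: "D$2$1 = 0" using off unfolding D_def by auto
  have "(D ** D)$1$1 = 0" "(D ** D)$2$2 = 0" using DD by auto
  hence "D$1$1 = 0" "D$2$2 = 0" using o12 o21 by (auto simp: mmult2)
  hence D0: "D = 0" using o12 o21 by (simp add: mat2_eq)
  have "S = (P ** matrix_inv P) ** S ** (P ** matrix_inv P)"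
    using minv_props[OF P] by (simp add: matrix_mul_lid matrix_mul_rid)
  also have "... = P ** D ** matrix_inv P" by (simp add: D_def matrix_mul_assoc)
  also have "... = 0" using D0 by (simp add: mat2_eq mmult2)
  finally show False using assms(2) by simp
qed

lemma diag_crit:
  fixes S :: "real^2^2"
  assumes "S$1$1 = 0" "S$2$2 = 0"
  shows "diagonalizable_over_C S \<longleftrightarrow> (S$1$2 = 0 \<longleftrightarrow> S$2$1 = 0)"
proof -
  define a where "a = complex_of_real (S$1$2)"
  define b where "b = complex_of_real (S$2$1)"
  define M where "M = map_matrix complex_of_real S"
  have M: "M$1$1 = 0" "M$2$2 = 0" "M$1$2 = a" "M$2$1 = b"
    using assms by (simp_all add: M_def a_def b_def)
  have ab: "(S$1$2 = 0) = (a = 0)" "(S$2$1 = 0) = (b = 0)" by (simp_all add: a_def b_def)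
  show ?thesis
  proof (cases "a = 0 \<and> b = 0")
    case True
    hence "M = 0" using M by (simp add: mat2_eq)
    moreover have "invertible (mat 1 :: complex^2^2)"
      unfolding invertible_def by (auto simp: matrix_mul_lid)
    ultimately have "invertible (mat 1 :: complex^2^2) \<and> (\<forall>i j. i \<noteq> j \<longrightarrow> (matrix_inv (mat 1 :: complex^2^2) ** M ** mat 1) $ i $ j = 0)"
      by (simp add: mmult2 forall_2)
    then have "\<exists>P::complex^2^2. invertible P \<and> (\<forall>i j. i \<noteq> j \<longrightarrow> (matrix_inv P ** M ** P) $ i $ j = 0)"
      by blast
    then show ?thesis unfolding diagonalizable_over_C_def M_def[symmetric] using True ab
      by simp
  next
    case F: False
    show ?thesis
    proof (cases "a \<noteq> 0 \<and> b \<noteq> 0")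
      case True
      define l where "l = csqrt (a*b)"
      have l2: "l*l = a*b" unfolding l_def by (metis power2_csqrt power2_eq_square)
      have l0: "l \<noteq> 0" using True l2 by auto
      define P :: "complex^2^2" where "P = vector [vector [a, a], vector [l, -l]]"
      define D :: "complex^2^2" where "D = vector [vector [l, 0], vector [0, -l]]"
      have Pinv: "invertible P" unfolding invertible_det_nz det_2 P_def using True l0 by simp
      have MP: "M ** P = P ** D" unfolding P_def D_def
        by (simp add: mat2_eq mmult2 M l2 algebra_simps)
      have "matrix_inv P ** M ** P = D"
        using minv_props[OF Pinv] MP by (metis matrix_mul_assoc matrix_mul_lid)
      hence "\<forall>i j. i \<noteq> j \<longrightarrow> (matrix_inv P ** M ** P) $ i $ j = 0"
        by (auto simp: D_def forall_2)
      then show ?thesis unfolding diagonalizable_over_C_def M_def[symmetric] using Pinv True ab by blast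
    next
      case False
      have "M ** M = 0" "M \<noteq> 0" using F False by (auto simp: mat2_eq mmult2 M)
      from nondiag_nilp[OF this] show ?thesis
        unfolding diagonalizable_over_C_def M_def[symmetric] using F False ab by blast
    qed
  qed
qed

lemma vec3_eq: "(x::real^3) = y \<longleftrightarrow> x$1 = y$1 \<and> x$2 = y$2 \<and> x$3 = y$3"
  by (auto simp: vec_eq_iff forall_3)

lemma vec3_decomp: "(vector [x, y, z] :: real^3) = x *\<^sub>R vector [1,0,0] + y *\<^sub>R vector [0,1,0] + z *\<^sub>R vector [0,0,1]"
  by (simp add: vec3_eq)

lemma vderiv3:
  assumes "(c1 has_real_derivative d1) (at x)" "(c2 has_real_derivative d2) (at x)"
    "(c3 has_real_derivative d3) (at x)"
  shows "((\<lambda>u. vector [c1 u, c2 u, c3 u] :: real^3) has_vector_derivative vector [d1, d2, d3]) (at x)"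
proof -
  have "((\<lambda>u. c1 u *\<^sub>R (vector [1,0,0]::real^3) + c2 u *\<^sub>R vector [0,1,0] + c3 u *\<^sub>R vector [0,0,1])
     has_vector_derivative (d1 *\<^sub>R vector [1,0,0] + d2 *\<^sub>R vector [0,1,0] + d3 *\<^sub>R vector [0,0,1])) (at x)"
    by (rule derivative_eq_intros assms | simp)+
  then show ?thesis by (simp only: vec3_decomp[symmetric])
qed

lemma curve_data:
  fixes \<gamma> :: "real \<Rightarrow> real^3"
  assumes "open I" "x \<in> I"
    "\<forall>u\<in>I. (\<gamma> has_vector_derivative (w u *\<^sub>R vector [p1 (k u), p2 (k u), p3 (k u)])) (at u)"
    "(w has_real_derivative w') (at x)" "(k has_real_derivative k') (at x)"
    "\<And>t. (p1 has_real_derivative q1 t) (at t)" "\<And>t. (p2 has_real_derivative q2 t) (at t)"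
    "\<And>t. (p3 has_real_derivative q3 t) (at t)"
  shows "vector_derivative \<gamma> (at x) = w x *\<^sub>R vector [p1 (k x), p2 (k x), p3 (k x)]"
    "((\<lambda>s. vector_derivative \<gamma> (at s)) has_vector_derivative
       (w' *\<^sub>R vector [p1 (k x), p2 (k x), p3 (k x)] + (w x * k') *\<^sub>R vector [q1 (k x), q2 (k x), q3 (k x)])) (at x)"
    "vector_derivative (\<lambda>s. vector_derivative \<gamma> (at s)) (at x) =
       w' *\<^sub>R vector [p1 (k x), p2 (k x), p3 (k x)] + (w x * k') *\<^sub>R vector [q1 (k x), q2 (k x), q3 (k x)]"
proof -
  show "vector_derivative \<gamma> (at x) = w x *\<^sub>R vector [p1 (k x), p2 (k x), p3 (k x)]"
    using assms(2,3) vector_derivative_at by blast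
  have c: "\<And>p q. (\<And>t. (p has_real_derivative q t) (at t)) \<Longrightarrow> ((\<lambda>u. p (k u)) has_real_derivative q (k x) * k') (at x)"
    using assms(5) by (metis DERIV_chain2)
  have d: "((\<lambda>u. w u *\<^sub>R (vector [p1 (k u), p2 (k u), p3 (k u)] :: real^3)) has_vector_derivative
      (w x *\<^sub>R vector [q1 (k x) * k', q2 (k x) * k', q3 (k x) * k'] + w' *\<^sub>R vector [p1 (k x), p2 (k x), p3 (k x)])) (at x)"
  proof -
    have "((\<lambda>u. vector [p1 (k u), p2 (k u), p3 (k u)] :: real^3) has_vector_derivative vector [q1 (k x) * k', q2 (k x) * k', q3 (k x) * k']) (at x)"
      by (rule vderiv3; rule c; fact assms(6-8))
    from has_vector_derivative_scaleR[OF assms(4) this] show ?thesis .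
  qed
  have dd: "((\<lambda>s. vector_derivative \<gamma> (at s)) has_vector_derivative
      (w x *\<^sub>R vector [q1 (k x) * k', q2 (k x) * k', q3 (k x) * k'] + w' *\<^sub>R vector [p1 (k x), p2 (k x), p3 (k x)])) (at x)"
    by (rule has_vector_derivative_transform_within_open[OF d assms(1,2)])
       (metis assms(3) vector_derivative_at)
  have "w x *\<^sub>R vector [q1 (k x) * k', q2 (k x) * k', q3 (k x) * k'] + w' *\<^sub>R vector [p1 (k x), p2 (k x), p3 (k x)]
     = w' *\<^sub>R vector [p1 (k x), p2 (k x), p3 (k x)] + (w x * k') *\<^sub>R (vector [q1 (k x), q2 (k x), q3 (k x)] :: real^3)"
    by (simp add: vec3_eq)
  with dd show "((\<lambda>s. vector_derivative \<gamma> (at s)) has_vector_derivative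
       (w' *\<^sub>R vector [p1 (k x), p2 (k x), p3 (k x)] + (w x * k') *\<^sub>R vector [q1 (k x), q2 (k x), q3 (k x)])) (at x)" by simp
  from dd show "vector_derivative (\<lambda>s. vector_derivative \<gamma> (at s)) (at x) =
       w' *\<^sub>R vector [p1 (k x), p2 (k x), p3 (k x)] + (w x * k') *\<^sub>R vector [q1 (k x), q2 (k x), q3 (k x)]"
    by (simp add: vector_derivative_at vec3_eq)
qed



lemma lip_add1: "lip (x + y) z = lip x z + lip y z" by (simp add: lip_def algebra_simps)
lemma lip_scale1: "lip (c *\<^sub>R x) y = c * lip x y" by (simp add: lip_def algebra_simps)
lemma lip_scale2: "lip x (c *\<^sub>R y) = c * lip x y" by (simp add: lip_def algebra_simps)
lemma lcross_scale1: "lcross (c *\<^sub>R x) y = c *\<^sub>R lcross x y"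
  by (simp add: lcross_def cross_mult_left Let_def vec_eq_iff forall_3)
lemma lcross_scale2: "lcross x (c *\<^sub>R y) = c *\<^sub>R lcross x y"
  by (simp add: lcross_def cross_mult_right Let_def vec_eq_iff forall_3)

context fixes g h :: real
begin
abbreviation "AA \<equiv> (vector [-1 - g^2, 1 - g^2, 2*g] :: real^3)"
abbreviation "Ap \<equiv> (vector [-2*g, -2*g, 2] :: real^3)"
abbreviation "BB \<equiv> (vector [1 + h^2, 1 - h^2, -2*h] :: real^3)"
abbreviation "Bp \<equiv> (vector [2*h, -2*h, -2] :: real^3)"
lemma b1: "lip AA AA = 0" by (simp add: lip_def) algebra
lemma b2: "lip BB BB = 0" by (simp add: lip_def) algebra
lemma b3: "lip AA BB = 2*(1-g*h)^2" by (simp add: lip_def) algebra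
lemma b4: "lip BB AA = 2*(1-g*h)^2" by (simp add: lip_def) algebra
lemma b5: "lip (lcross AA BB) (lcross AA BB) = 4*(1-g*h)^4"
  by (simp add: lip_def lcross_def cross3_def Let_def) algebra
lemma b6: "lip AA (lcross AA BB) = 0"
  by (simp add: lip_def lcross_def cross3_def Let_def) algebra
lemma b7: "lip Ap (lcross AA BB) = -4*(1-g*h)^2"
  by (simp add: lip_def lcross_def cross3_def Let_def) algebra
lemma b8: "lip BB (lcross AA BB) = 0"
  by (simp add: lip_def lcross_def cross3_def Let_def) algebra
lemma b9: "lip Bp (lcross AA BB) = 4*(1-g*h)^2"
  by (simp add: lip_def lcross_def cross3_def Let_def) algebra
lemma b10: "cross3 AA Ap $ 1 = 2 + 2*g^2" by (simp add: cross3_def) algebra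
lemma b11: "cross3 BB Bp $ 1 = -2 - 2*h^2" by (simp add: cross3_def) algebra
lemma b12: "g*h = 1 \<Longrightarrow> AA + g^2 *\<^sub>R BB = 0"
  by (simp add: vec_eq_iff forall_3) algebra
end




theorem proposition3p1:
  fixes g1 g2 w1 w2 :: "real \<Rightarrow> real"
    and \<phi> \<psi> :: "real \<Rightarrow> real^3"
    and I J :: "real set" and up vp :: real
  assumes "open I" "is_interval I" "open J" "is_interval J"
    and "up \<in> I" "vp \<in> J"
    and "smooth_on I g1" "smooth_on I w1" "smooth_on J g2" "smooth_on J w2"
    and "\<forall>u\<in>I. w1 u \<noteq> 0" "\<forall>v\<in>J. w2 v \<noteq> 0"
    and "\<exists>W. open W \<and> W \<subseteq> I \<times> J \<and> I \<times> J \<subseteq> closure W \<and>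
              (\<forall>(u,v)\<in>W. g1 u * g2 v \<noteq> 1)"
    and "\<forall>u\<in>I. (\<phi> has_vector_derivative
              (w1 u *\<^sub>R (vector [-1 - (g1 u)^2, 1 - (g1 u)^2, 2 * g1 u] :: real^3))) (at u)"
    and "\<forall>v\<in>J. (\<psi> has_vector_derivative
              (w2 v *\<^sub>R (vector [1 + (g2 v)^2, 1 - (g2 v)^2, -2 * g2 v] :: real^3))) (at v)"
    and "regular_point (\<lambda>(u,v). (1/2) *\<^sub>R (\<phi> u + \<psi> v)) (up, vp)"
  shows "(umbilic_at (\<lambda>(u,v). (1/2) *\<^sub>R (\<phi> u + \<psi> v)) (up, vp) \<longleftrightarrow>
            degenerate_at \<phi> up \<and> degenerate_at \<psi> vp)
       \<and> (quasi_umbilic_at (\<lambda>(u,v). (1/2) *\<^sub>R (\<phi> u + \<psi> v)) (up, vp) \<longleftrightarrow>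
            (degenerate_at \<phi> up \<noteq> degenerate_at \<psi> vp))"
  proof -
  define f where "f = (\<lambda>(u::real,v::real). (1/2) *\<^sub>R (\<phi> u + \<psi> v))"
  have smooth_d: "\<And>S k x. smooth_on S k \<Longrightarrow> x \<in> S \<Longrightarrow> (k has_real_derivative deriv k x) (at x)"
    unfolding smooth_on_def by (metis DERIV_deriv_iff_field_differentiable funpow_0)
  define g where "g = g1 up"
  define h where "h = g2 vp"
  define a where "a = w1 up"
  define b where "b = w2 vp"
  define ga where "ga = deriv g1 up"
  define hb where "hb = deriv g2 vp"
  define wa where "wa = deriv w1 up"
  define wb where "wb = deriv w2 vp"
  have a0: "a \<noteq> 0" using assms(11,5) a_def by auto
  have b0: "b \<noteq> 0" using assms(12,6) b_def by auto
  have p1: "\<And>t. ((\<lambda>g::real. -1 - g^2) has_real_derivative -2*t) (at t)"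
    by (auto intro!: derivative_eq_intros)
  have p2: "\<And>t. ((\<lambda>g::real. 1 - g^2) has_real_derivative -2*t) (at t)"
    by (auto intro!: derivative_eq_intros)
  have p3: "\<And>t. ((\<lambda>g::real. 2*g) has_real_derivative 2) (at t)"
    by (auto intro!: derivative_eq_intros)
  have q1: "\<And>t. ((\<lambda>g::real. 1 + g^2) has_real_derivative 2*t) (at t)"
    by (auto intro!: derivative_eq_intros)
  have q3: "\<And>t. ((\<lambda>g::real. -2*g) has_real_derivative -2) (at t)"
    by (auto intro!: derivative_eq_intros)
  have phider: "\<forall>u\<in>I. (\<phi> has_vector_derivative (w1 u *\<^sub>R vector [(\<lambda>g. -1 - g^2) (g1 u), (\<lambda>g. 1 - g^2) (g1 u), (\<lambda>g. 2*g) (g1 u)])) (at u)"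
    using assms(14) by simp
  have psider: "\<forall>v\<in>J. (\<psi> has_vector_derivative (w2 v *\<^sub>R vector [(\<lambda>g. 1 + g^2) (g2 v), (\<lambda>g. 1 - g^2) (g2 v), (\<lambda>g. -2*g) (g2 v)])) (at v)"
    using assms(15) by simp
  note cdphi = curve_data[OF assms(1,5) phider smooth_d[OF assms(8,5)] smooth_d[OF assms(7,5)] p1 p2 p3]
  note cdpsi = curve_data[OF assms(3,6) psider smooth_d[OF assms(10,6)] smooth_d[OF assms(9,6)] q1 p2 q3]
  define AA where "AA = (vector [-1 - g^2, 1 - g^2, 2*g] :: real^3)"
  define Ap where "Ap = (vector [-2*g, -2*g, 2] :: real^3)"
  define BB where "BB = (vector [1 + h^2, 1 - h^2, -2*h] :: real^3)"
  define Bp where "Bp = (vector [2*h, -2*h, -2] :: real^3)"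
  have phi1: "vector_derivative \<phi> (at up) = a *\<^sub>R AA"
    using cdphi(1) by (simp add: AA_def a_def g_def)
  have phi2: "vector_derivative (\<lambda>s. vector_derivative \<phi> (at s)) (at up) = wa *\<^sub>R AA + (a*ga) *\<^sub>R Ap"
    using cdphi(3) by (simp add: AA_def Ap_def a_def g_def wa_def ga_def)
  have phi2d: "((\<lambda>s. vector_derivative \<phi> (at s)) has_vector_derivative (wa *\<^sub>R AA + (a*ga) *\<^sub>R Ap)) (at up)"
    using cdphi(2) by (simp add: AA_def Ap_def a_def g_def wa_def ga_def)
  have psi1: "vector_derivative \<psi> (at vp) = b *\<^sub>R BB"
    using cdpsi(1) by (simp add: BB_def b_def h_def)
  have psi2: "vector_derivative (\<lambda>s. vector_derivative \<psi> (at s)) (at vp) = wb *\<^sub>R BB + (b*hb) *\<^sub>R Bp"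
    using cdpsi(3) by (simp add: BB_def Bp_def b_def h_def wb_def hb_def)
  have psi2d: "((\<lambda>s. vector_derivative \<psi> (at s)) has_vector_derivative (wb *\<^sub>R BB + (b*hb) *\<^sub>R Bp)) (at vp)"
    using cdpsi(2) by (simp add: BB_def Bp_def b_def h_def wb_def hb_def)
  have phiD: "\<And>u. u \<in> I \<Longrightarrow> (\<phi> has_vector_derivative vector_derivative \<phi> (at u)) (at u)"
    by (metis assms(14) vector_derivative_at)
  have psiD: "\<And>v. v \<in> J \<Longrightarrow> (\<psi> has_vector_derivative vector_derivative \<psi> (at v)) (at v)"
    by (metis assms(15) vector_derivative_at)
  have pu: "\<And>u v. u \<in> I \<Longrightarrow> pd_u f (u, v) = (1/2) *\<^sub>R vector_derivative \<phi> (at u)"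
  proof -
    fix u v assume u: "u \<in> I"
    have "((\<lambda>u'. (1/2) *\<^sub>R (\<phi> u' + \<psi> v)) has_vector_derivative (1/2) *\<^sub>R vector_derivative \<phi> (at u)) (at u)"
      using has_vector_derivative_scaleR[OF DERIV_const has_vector_derivative_add[OF phiD[OF u] has_vector_derivative_const], of "1/2" "\<psi> v"]
      by simp
    then show "pd_u f (u, v) = (1/2) *\<^sub>R vector_derivative \<phi> (at u)"
      unfolding pd_u_def f_def by (simp add: vector_derivative_at)
  qed
  have pv: "\<And>u v. v \<in> J \<Longrightarrow> pd_v f (u, v) = (1/2) *\<^sub>R vector_derivative \<psi> (at v)"
  proof -
    fix u v assume v: "v \<in> J"
    have "((\<lambda>v'. (1/2) *\<^sub>R (\<phi> u + \<psi> v')) has_vector_derivative (1/2) *\<^sub>R vector_derivative \<psi> (at v)) (at v)"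
      using has_vector_derivative_scaleR[OF DERIV_const has_vector_derivative_add[OF has_vector_derivative_const psiD[OF v]], of "1/2" "\<phi> u"]
      by simp
    then show "pd_v f (u, v) = (1/2) *\<^sub>R vector_derivative \<psi> (at v)"
      unfolding pd_v_def f_def by (simp add: vector_derivative_at)
  qed
  have fu: "pd_u f (up, vp) = (1/2) *\<^sub>R (a *\<^sub>R AA)" using pu[OF assms(5)] phi1 by simp
  have fv: "pd_v f (up, vp) = (1/2) *\<^sub>R (b *\<^sub>R BB)" using pv[OF assms(6)] psi1 by simp
  have fuu: "pd_uu f (up, vp) = (1/2) *\<^sub>R (wa *\<^sub>R AA + (a*ga) *\<^sub>R Ap)"
  proof -
    have "((\<lambda>u. pd_u f (u, vp)) has_vector_derivative (1/2) *\<^sub>R (wa *\<^sub>R AA + (a*ga) *\<^sub>R Ap)) (at up)"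
      using has_vector_derivative_transform_within_open[OF
          has_vector_derivative_scaleR[OF DERIV_const phi2d, of "1/2"] assms(1,5), of "\<lambda>u. pd_u f (u, vp)"]
      pu by simp
    then show ?thesis unfolding pd_uu_def by (simp add: vector_derivative_at)
  qed
  have fvv: "pd_vv f (up, vp) = (1/2) *\<^sub>R (wb *\<^sub>R BB + (b*hb) *\<^sub>R Bp)"
  proof -
    have "((\<lambda>v. pd_v f (up, v)) has_vector_derivative (1/2) *\<^sub>R (wb *\<^sub>R BB + (b*hb) *\<^sub>R Bp)) (at vp)"
      using has_vector_derivative_transform_within_open[OF
          has_vector_derivative_scaleR[OF DERIV_const psi2d, of "1/2"] assms(3,6), of "\<lambda>v. pd_v f (up, v)"]
      pv by simp
    then show ?thesis unfolding pd_vv_def by (simp add: vector_derivative_at)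
  qed
  have fuv: "pd_uv f (up, vp) = 0"
    unfolding pd_uv_def using pu[OF assms(5)]
    by (simp add: vector_derivative_at[OF has_vector_derivative_const])
  \<comment> \<open>regularity gives g h \<noteq> 1\<close>
  have gh: "g * h \<noteq> 1"
  proof
    assume gh1: "g * h = 1"
    define D where "D = (\<lambda>q::real\<times>real. (1/2) *\<^sub>R (fst q *\<^sub>R vector_derivative \<phi> (at up) + snd q *\<^sub>R vector_derivative \<psi> (at vp)))"
    have d1: "((\<lambda>q::real\<times>real. \<phi> (fst q)) has_derivative (\<lambda>q. fst q *\<^sub>R vector_derivative \<phi> (at up))) (at (up, vp))"
      using has_derivative_compose[OF has_derivative_fst[OF has_derivative_ident, of "at (up,vp)"],
          of \<phi> "\<lambda>t. t *\<^sub>R vector_derivative \<phi> (at up)"] phiD[OF assms(5)]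
      by (simp add: has_vector_derivative_def)
    have d2: "((\<lambda>q::real\<times>real. \<psi> (snd q)) has_derivative (\<lambda>q. snd q *\<^sub>R vector_derivative \<psi> (at vp))) (at (up, vp))"
      using has_derivative_compose[OF has_derivative_snd[OF has_derivative_ident, of "at (up,vp)"],
          of \<psi> "\<lambda>t. t *\<^sub>R vector_derivative \<psi> (at vp)"] psiD[OF assms(6)]
      by (simp add: has_vector_derivative_def)
    have "(f has_derivative D) (at (up, vp))"
      using has_derivative_scaleR_right[OF has_derivative_add[OF d1 d2], of "1/2"]
      unfolding D_def f_def by (simp add: case_prod_unfold)
    hence "D = frechet_derivative f (at (up, vp))" by (rule frechet_derivative_at)
    hence injD: "inj D" using assms(16) unfolding regular_point_def f_def by simp
    have e: "b *\<^sub>R (a *\<^sub>R AA) + (a*g^2) *\<^sub>R (b *\<^sub>R BB) = (a*b) *\<^sub>R (AA + g^2 *\<^sub>R BB)"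
      by (simp add: scaleR_add_right mult.commute)
    have "AA + g^2 *\<^sub>R BB = 0" unfolding AA_def BB_def using gh1 by (rule b12)
    hence "D (b, a*g^2) = 0"
      unfolding D_def fst_conv snd_conv phi1 psi1 e by simp
    moreover have "D (0, 0) = 0" unfolding D_def by simp
    ultimately have "(b, a*g^2) = (0, 0)" using injD by (metis injD inj_def)
    thus False using b0 by simp
  qed
  have gh': "1 - g*h \<noteq> 0" using gh by simp
  define Fv where "Fv = a*b*(1-g*h)^2/2"
  have Fv0: "Fv \<noteq> 0" using a0 b0 gh gh' unfolding Fv_def by simp
  define nn where "nn = lcross ((1/2) *\<^sub>R (a *\<^sub>R AA)) ((1/2) *\<^sub>R (b *\<^sub>R BB))"
  have B5: "lip (lcross AA BB) (lcross AA BB) = 4*(1-g*h)^4" unfolding AA_def BB_def by (rule b5)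
  have nn2: "nn = (a*b/4) *\<^sub>R lcross AA BB" unfolding nn_def by (simp add: lcross_scale1 lcross_scale2)
  have lnn: "lip nn nn = (a*b)^2*(1-g*h)^4/4" unfolding nn2 lip_scale1 lip_scale2 B5 by algebra
  have lnn0: "lip nn nn \<noteq> 0" unfolding lnn using a0 b0 gh gh' by simp
  define s where "s = 1 / sqrt (lip nn nn)"
  have s0: "s \<noteq> 0" using lnn0 unfolding s_def by simp
  have nu: "unit_normal f (up, vp) = s *\<^sub>R nn"
    unfolding unit_normal_def fu fv nn_def s_def by (simp add: Let_def)
  define L where "L = s * (- (a^2*b*ga*(1-g*h)^2)/2)"
  define N where "N = s * ((a*b^2*hb*(1-g*h)^2)/2)"
  have L0: "L = 0 \<longleftrightarrow> ga = 0" using s0 a0 b0 gh gh' unfolding L_def by simp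
  have N0: "N = 0 \<longleftrightarrow> hb = 0" using s0 a0 b0 gh gh' unfolding N_def by simp
  have I: "first_ff f (up, vp) = vector [vector [0, Fv], vector [Fv, 0]]"
  proof -
    have "lip AA AA = 0" "lip BB BB = 0" "lip AA BB = 2*(1-g*h)^2" "lip BB AA = 2*(1-g*h)^2"
      unfolding AA_def BB_def by (rule b1 b2 b3 b4)+
    then show ?thesis
      unfolding first_ff_def fu fv Fv_def lip_scale1 lip_scale2 by (simp add: mat2_eq)
  qed
  have II: "second_ff f (up, vp) = vector [vector [L, 0], vector [0, N]]"
  proof -
    have B67: "lip AA (lcross AA BB) = 0" "lip Ap (lcross AA BB) = -4*(1-g*h)^2"
        "lip BB (lcross AA BB) = 0" "lip Bp (lcross AA BB) = 4*(1-g*h)^2"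
      unfolding AA_def BB_def Ap_def Bp_def by (rule b6 b7 b8 b9)+
    have "lip (pd_uu f (up, vp)) (unit_normal f (up, vp)) = L"
      unfolding fuu nu lip_scale2 nn2 lip_scale1 lip_add1 B67 L_def by (simp add: field_simps power2_eq_square)
    moreover have "lip (pd_vv f (up, vp)) (unit_normal f (up, vp)) = N"
      unfolding fvv nu lip_scale2 nn2 lip_scale1 lip_add1 B67 N_def by (simp add: field_simps power2_eq_square)
    moreover have "lip (pd_uv f (up, vp)) (unit_normal f (up, vp)) = 0"
      unfolding fuv by (simp add: lip_def)
    ultimately show ?thesis unfolding second_ff_def Let_def by simp
  qed
  have degphi: "degenerate_at \<phi> up \<longleftrightarrow> ga = 0"
  proof
    assume "degenerate_at \<phi> up"
    hence "cross3 (a *\<^sub>R AA) (wa *\<^sub>R AA + (a*ga) *\<^sub>R Ap) $ 1 = 0"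
      unfolding degenerate_at_def phi1 phi2 by simp
    moreover have "cross3 (a *\<^sub>R AA) (wa *\<^sub>R AA + (a*ga) *\<^sub>R Ap) = (a*(a*ga)) *\<^sub>R cross3 AA Ap"
      by (simp add: cross_add_right cross_mult_left cross_mult_right)
    moreover have "cross3 AA Ap $ 1 = 2 + 2*g^2" unfolding AA_def Ap_def by (rule b10)
    ultimately have "a^2*ga*(2+2*g^2) = 0" by (simp add: power2_eq_square)
    moreover have "2 + 2*g^2 \<noteq> (0::real)" by (metis add_pos_nonneg zero_less_numeral mult_nonneg_nonneg zero_le_numeral zero_le_power2 less_irrefl)
    ultimately show "ga = 0" using a0 by simp
  next
    assume "ga = 0"
    then show "degenerate_at \<phi> up" unfolding degenerate_at_def phi1 phi2
      by (simp add: cross_add_right cross_mult_left cross_mult_right)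
  qed
  have degpsi: "degenerate_at \<psi> vp \<longleftrightarrow> hb = 0"
  proof
    assume "degenerate_at \<psi> vp"
    hence "cross3 (b *\<^sub>R BB) (wb *\<^sub>R BB + (b*hb) *\<^sub>R Bp) $ 1 = 0"
      unfolding degenerate_at_def psi1 psi2 by simp
    moreover have "cross3 (b *\<^sub>R BB) (wb *\<^sub>R BB + (b*hb) *\<^sub>R Bp) = (b*(b*hb)) *\<^sub>R cross3 BB Bp"
      by (simp add: cross_add_right cross_mult_left cross_mult_right)
    moreover have "cross3 BB Bp $ 1 = -2 - 2*h^2" unfolding BB_def Bp_def by (rule b11)
    ultimately have "-(b^2*hb*(2+2*h^2)) = 0" by (simp add: power2_eq_square algebra_simps)
    moreover have "2 + 2*h^2 \<noteq> (0::real)" by (metis add_pos_nonneg zero_less_numeral mult_nonneg_nonneg zero_le_numeral zero_le_power2 less_irrefl)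
    ultimately show "hb = 0" using b0 by simp
  next
    assume "hb = 0"
    then show "degenerate_at \<psi> vp" unfolding degenerate_at_def psi1 psi2
      by (simp add: cross_add_right cross_mult_left cross_mult_right)
  qed
  have reg: "regular_point f (up, vp)" using assms(16) unfolding f_def .
  have umb: "umbilic_at f (up, vp) \<longleftrightarrow> L = 0 \<and> N = 0"
  proof
    assume "umbilic_at f (up, vp)"
    then obtain k where "second_ff f (up, vp) = k *\<^sub>R first_ff f (up, vp)" unfolding umbilic_at_def by blast
    hence "vector [vector [L, 0], vector [0, N]] = k *\<^sub>R (vector [vector [0, Fv], vector [Fv, 0]] :: real^2^2)"
      using I II by simp
    then show "L = 0 \<and> N = 0" by (simp add: mat2_eq)
  next
    assume "L = 0 \<and> N = 0"
    hence "second_ff f (up, vp) = 0 *\<^sub>R first_ff f (up, vp)" using II by (simp add: mat2_eq)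
    then show "umbilic_at f (up, vp)" unfolding umbilic_at_def using reg by blast
  qed
  have SO: "shape_operator f (up, vp) = vector [vector [0, N/Fv], vector [L/Fv, 0]]"
    unfolding shape_operator_def I II inv_antidiag[OF Fv0] by (simp add: mat2_eq mmult2)
  have qu: "quasi_umbilic_at f (up, vp) \<longleftrightarrow> \<not> (N = 0 \<longleftrightarrow> L = 0)"
    unfolding quasi_umbilic_at_def SO using reg Fv0 by (subst diag_crit) simp_all
  have "(umbilic_at f (up, vp) \<longleftrightarrow> degenerate_at \<phi> up \<and> degenerate_at \<psi> vp)
       \<and> (quasi_umbilic_at f (up, vp) \<longleftrightarrow> (degenerate_at \<phi> up \<noteq> degenerate_at \<psi> vp))"
    using umb qu degphi degpsi L0 N0 by blast
  then show ?thesis unfolding f_def .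
qed

end
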